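(* Let $n\ge 2$ be an integer and $m=\min\{k\in\mathbb{N}: n\le\tfrac12(k^3-k^2)\}$. Then $\chi_{L_2}(P_n)=m$. Moreover, for the path $P_n=v_1v_2\cdots v_n$ there exists a neighbor locating coloring $f_n:V(P_n)\to[m]$ (onto) such that $f_n(v_{n-1})=2$ and $f_n(v_n)=1$; furthermore, if $n\ge 9$ then also $f_n(v_{n-2})=m$, and if $n\ge 9$ and $n\ne\tfrac12(m^3-m^2)-1$ then also $f_n(v_1)=2$ and $f_n(v_2)=1$.
   Context: All graphs are finite and simple; $P_n=v_1v_2\cdots v_n$ is the path with edges $v_iv_{i+1}$, $1\le i<n$. A proper $k$-coloring of $G$ is a map $f$ from $V(G)$ onto $[k]=\{1,\dots,k\}$ with adjacent vertices receiving different colors; $f(S)=\{f(u):u\in S\}$ and $N_G(u)$ is the neighborhood of $u$. A proper $k$-coloring $f$ is a neighbor locating coloring if for any two distinct vertices $u,v$ with $f(u)=f(v)$ we have $f(N_G(u))\ne f(N_G(v))$; $\chi_{L_2}(G)$ is the minimum number of colors in a neighbor locating coloring of $G$. *)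

theory Defs
  imports Main
begin

text \<open>A finite simple graph is given by a vertex set V and an adjacency
relation E (assumed symmetric and irreflexive on V where relevant).\<close>

definition nbhd :: "('a \<Rightarrow> 'a \<Rightarrow> bool) \<Rightarrow> 'a set \<Rightarrow> 'a \<Rightarrow> 'a set" where
  "nbhd E V u = {v \<in> V. E u v}"

definition proper_coloring :: "'a set \<Rightarrow> ('a \<Rightarrow> 'a \<Rightarrow> bool) \<Rightarrow> nat \<Rightarrow> ('a \<Rightarrow> nat) \<Rightarrow> bool" where
  "proper_coloring V E k f \<longleftrightarrow> f ` V = {1..k} \<and> (\<forall>u\<in>V. \<forall>v\<in>V. E u v \<longrightarrow> f u \<noteq> f v)"

definition neighbor_locating_coloring ::
  "'a set \<Rightarrow> ('a \<Rightarrow> 'a \<Rightarrow> bool) \<Rightarrow> nat \<Rightarrow> ('a \<Rightarrow> nat) \<Rightarrow> bool" where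
  "neighbor_locating_coloring V E k f \<longleftrightarrow> proper_coloring V E k f \<and>
     (\<forall>u\<in>V. \<forall>v\<in>V. u \<noteq> v \<and> f u = f v \<longrightarrow> f ` nbhd E V u \<noteq> f ` nbhd E V v)"

definition chi_L2 :: "'a set \<Rightarrow> ('a \<Rightarrow> 'a \<Rightarrow> bool) \<Rightarrow> nat" where
  "chi_L2 V E = (LEAST k. \<exists>f. neighbor_locating_coloring V E k f)"

text \<open>The path P_n = v_1 v_2 ... v_n, with v_i represented by the natural number i.\<close>
definition path_V :: "nat \<Rightarrow> nat set" where
  "path_V n = {1..n}"

definition path_E :: "nat \<Rightarrow> nat \<Rightarrow> bool" where
  "path_E i j \<longleftrightarrow> i + 1 = j \<or> j + 1 = i"

end

theory Submission
  imports Defs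
begin

fun tr :: "nat option \<Rightarrow> nat list \<Rightarrow> nat option \<Rightarrow> (nat \<times> nat set) list" where
  "tr p [] q = []"
| "tr p [x] q = [(x, set_option p \<union> set_option q)]"
| "tr p (x#y#zs) q = (x, set_option p \<union> {y}) # tr (Some x) (y#zs) q"

lemma tr_app: "xs \<noteq> [] \<Longrightarrow> ys \<noteq> [] \<Longrightarrow>
  tr p (xs @ ys) q = tr p xs (Some (hd ys)) @ tr (Some (last xs)) ys q"
proof (induction p xs "Some (hd ys)" rule: tr.induct)
  case (2 p x)
  then show ?case by (cases ys) auto
next
  case (3 p x y zs)
  then show ?case by auto
qed auto

lemma tr_length[simp]: "length (tr p xs q) = length xs"
  by (induction p xs q rule: tr.induct) auto

lemma tr_nth: "i < length xs \<Longrightarrow> tr p xs q ! i =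
   (xs ! i, (if i = 0 then set_option p else {xs ! (i - 1)}) \<union>
            (if i = length xs - 1 then set_option q else {xs ! (i + 1)}))"
proof (induction p xs q arbitrary: i rule: tr.induct)
  case (3 p x y zs q)
  show ?case
  proof (cases i)
    case 0 then show ?thesis by simp
  next
    case (Suc k)
    then have "k < length (y#zs)" using 3 by simp
    from "3.IH"[OF this] Suc show ?thesis by (cases k) auto
  qed
qed auto

definition seg :: "nat \<Rightarrow> nat \<Rightarrow> nat list" where
  "seg v w = (if v = w then [v] else [v,w])"
definition blk :: "nat \<Rightarrow> (nat\<times>nat\<times>nat) list \<Rightarrow> nat list" where
  "blk m ds = concat (map (\<lambda>(u,v,w). m # seg v w) ds) @ [m]"
fun chain :: "nat \<Rightarrow> (nat\<times>nat\<times>nat) list \<Rightarrow> bool" where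
  "chain e [] = True"
| "chain e ((u,v,w)#ds) = (u = e \<and> chain w ds)"
fun endp :: "nat \<Rightarrow> (nat\<times>nat\<times>nat) list \<Rightarrow> nat" where
  "endp e [] = e"
| "endp e ((u,v,w)#ds) = endp w ds"
definition stri :: "nat \<Rightarrow> nat set \<Rightarrow> (nat \<times> nat set) set" where
  "stri m S = (\<lambda>x. (x, insert m (S - {x}))) ` S"
definition segtr :: "nat \<Rightarrow> nat \<Rightarrow> nat \<Rightarrow> (nat \<times> nat set) list" where
  "segtr m v w = (if v = w then [(v,{m})] else [(v,{m,w}),(w,{v,m})])"
fun BL :: "nat \<Rightarrow> nat \<Rightarrow> (nat\<times>nat\<times>nat) list \<Rightarrow> (nat \<times> nat set) list" where
  "BL m e [] = [(m, {e, 1})]"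
| "BL m e ((u,v,w)#ds) = (m,{u,v}) # segtr m v w @ BL m w ds"

definition Tl :: "nat\<times>nat\<times>nat \<Rightarrow> nat set" where "Tl = (\<lambda>(u,v,w). {u,v})"
definition Sl :: "nat\<times>nat\<times>nat \<Rightarrow> nat set" where "Sl = (\<lambda>(u,v,w). {v,w})"

lemma blk_Cons: "blk m ((u,v,w)#ds) = [m] @ (seg v w @ blk m ds)"
  by (simp add: blk_def)

lemma blk_ne[simp]: "blk m ds \<noteq> []" by (simp add: blk_def)
lemma hd_blk: "hd (blk m ds) = m" by (cases ds) (auto simp: blk_def)
lemma last_blk: "last (blk m ds) = m" by (simp add: blk_def)

lemma blk_tr: "chain e ds \<Longrightarrow> tr (Some e) (blk m ds) (Some 1) = BL m e ds"
proof (induction ds arbitrary: e)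
  case Nil then show ?case by (simp add: blk_def insert_commute)
next
  case (Cons a ds)
  obtain u v w where a: "a = (u,v,w)" by (cases a)
  have seg_ne: "seg v w \<noteq> []" and hs: "hd (seg v w) = v" and ls: "last (seg v w) = w"
    by (auto simp: seg_def)
  have tseg: "tr (Some m) (seg v w) (Some m) = segtr m v w"
    by (auto simp: seg_def segtr_def insert_commute)
  from Cons.prems a have u: "u = e" and ch: "chain w ds" by auto
  have "tr (Some e) (blk m (a#ds)) (Some 1) =
     tr (Some e) [m] (Some v) @ tr (Some m) (seg v w @ blk m ds) (Some 1)"
    unfolding a blk_Cons by (subst tr_app) (auto simp: seg_def)
  also have "\<dots> = tr (Some e) [m] (Some v) @ segtr m v w @ tr (Some w) (blk m ds) (Some 1)"
    by (subst tr_app) (auto simp: seg_ne hd_blk ls tseg)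
  also have "\<dots> = BL m e (a#ds)" using Cons.IH[OF ch] a u by (simp add: insert_commute)
  finally show ?case .
qed

lemma set_segtr: "set (segtr m v w) = stri m {v,w}"
  by (auto simp: segtr_def stri_def insert_commute)

lemma distinct_segtr: "distinct (segtr m v w)"
  by (auto simp: segtr_def)

lemma set_BL: "set (BL m e ds) = (\<lambda>T. (m,T)) ` set (map Tl ds @ [{endp e ds, 1}]) \<union>
   \<Union> (stri m ` set (map Sl ds))"
  by (induction m e ds rule: BL.induct) (auto simp: set_segtr Tl_def Sl_def)

lemma stri_fst: "p \<in> stri m S \<Longrightarrow> fst p \<in> S"
  by (auto simp: stri_def)

lemma stri_inj: "p \<in> stri m S \<Longrightarrow> p \<in> stri m S' \<Longrightarrow> m \<notin> S \<Longrightarrow> m \<notin> S' \<Longrightarrow> S = S'"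
  unfolding stri_def by (auto simp: insert_Diff_if)

lemma BL_distinct:
  assumes "distinct (map Tl ds @ [{endp e ds, 1}])" "distinct (map Sl ds)"
    "\<forall>(u,v,w)\<in>set ds. v \<noteq> m \<and> w \<noteq> m"
  shows "distinct (BL m e ds)"
  using assms
proof (induction ds arbitrary: e)
  case Nil then show ?case by simp
next
  case (Cons a ds)
  obtain u v w where a: "a = (u,v,w)" by (cases a)
  have vm: "v \<noteq> m" "w \<noteq> m" using Cons.prems(3) a by auto
  have Sm: "\<forall>S\<in>set (map Sl ds). m \<notin> S" using Cons.prems(3) by (auto simp: Sl_def)
  have d1: "distinct (map Tl ds @ [{endp w ds, 1}])" using Cons.prems(1) a by simp
  have d2: "distinct (map Sl ds)" using Cons.prems(2) by simp
  have IH: "distinct (BL m w ds)" using Cons.IH[OF d1 d2] Cons.prems(3) by simp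
  have T1: "{u,v} \<notin> set (map Tl ds @ [{endp w ds, 1}])" using Cons.prems(1) a by (simp add: Tl_def)
  have S1: "{v,w} \<notin> set (map Sl ds)" using Cons.prems(2) a by (simp add: Sl_def)
  have n1: "(m,{u,v}) \<notin> set (segtr m v w)"
    using stri_fst[of "(m,{u,v})" m "{v,w}"] vm by (auto simp: set_segtr)
  have n2: "(m,{u,v}) \<notin> set (BL m w ds)"
  proof
    assume "(m,{u,v}) \<in> set (BL m w ds)"
    then show False unfolding set_BL
    proof
      assume "(m,{u,v}) \<in> (\<lambda>T. (m,T)) ` set (map Tl ds @ [{endp w ds, 1}])"
      then show False using T1 by auto
    next
      assume "(m,{u,v}) \<in> \<Union> (stri m ` set (map Sl ds))"
      then obtain S where "S \<in> set (map Sl ds)" "(m,{u,v}) \<in> stri m S" by auto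
      then show False using stri_fst Sm by fastforce
    qed
  qed
  have n3: "set (segtr m v w) \<inter> set (BL m w ds) = {}"
  proof (rule ccontr)
    assume "set (segtr m v w) \<inter> set (BL m w ds) \<noteq> {}"
    then obtain p where p1: "p \<in> stri m {v,w}" and p2: "p \<in> set (BL m w ds)"
      by (auto simp: set_segtr)
    have "fst p \<in> {v,w}" using stri_fst[OF p1] .
    then have "fst p \<noteq> m" using vm by auto
    from p2 show False unfolding set_BL
    proof
      assume "p \<in> (\<lambda>T. (m,T)) ` set (map Tl ds @ [{endp w ds, 1}])"
      then show False using \<open>fst p \<noteq> m\<close> by auto
    next
      assume "p \<in> \<Union> (stri m ` set (map Sl ds))"
      then obtain S where S: "S \<in> set (map Sl ds)" "p \<in> stri m S" by auto
      have "{v,w} = S" using stri_inj[OF p1 S(2)] vm Sm S(1) by auto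
      then show False using S1 S(1) by simp
    qed
  qed
  show ?case using a IH n1 n2 n3 distinct_segtr by auto
qed

definition goodl :: "nat \<Rightarrow> nat list \<Rightarrow> bool" where
  "goodl m G \<longleftrightarrow> successively (\<noteq>) G \<and> distinct (tr None G None) \<and> set G \<subseteq> {1..m}"

lemma tr_set: "p \<in> set (tr a xs b) \<Longrightarrow> fst p \<in> set xs \<and> snd p \<subseteq> set xs \<union> set_option a \<union> set_option b"
  by (induction a xs b rule: tr.induct) auto

lemma blk_succ: "\<forall>(u,v,w)\<in>set ds. v \<noteq> m \<and> w \<noteq> m \<Longrightarrow> successively (\<noteq>) (blk m ds)"
proof (induction ds)
  case Nil then show ?case by (simp add: blk_def)
next
  case (Cons a ds)
  obtain u v w where a: "a = (u,v,w)" by (cases a)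
  obtain y ys where b: "blk m ds = y # ys" using blk_ne by (cases "blk m ds") auto
  have "y = m" using hd_blk[of m ds] b by simp
  show ?case using Cons b \<open>y = m\<close> unfolding a blk_Cons
    by (auto simp: successively_append_iff seg_def)
qed

lemma blk_set: "set (blk m ds) \<subseteq> insert m (\<Union>(u,v,w)\<in>set ds. {v,w})"
  by (auto simp: blk_def seg_def split: if_splits)

lemma BL_mem: "p \<in> set (BL m e ds) \<Longrightarrow> \<forall>S\<in>set (map Sl ds). m \<notin> S \<Longrightarrow>
   (fst p = m) \<or> (\<exists>S\<in>set (map Sl ds). fst p \<in> S \<and> snd p = insert m (S - {fst p}))"
  unfolding set_BL stri_def by auto

lemma step_glue:
  assumes g: "goodl M (1#2#rest)" and mM: "m = Suc M" and M2: "M \<ge> 2"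
    and ch: "chain 2 ds" and dT: "distinct (map Tl ds @ [{endp 2 ds, 1}])"
    and dS: "distinct (map Sl ds)" and S12: "{1,2} \<notin> set (map Sl ds)"
    and rng: "\<forall>(u,v,w)\<in>set ds. v \<in> {1..M} \<and> w \<in> {1..M}"
  shows "goodl m ([1,2] @ blk m ds @ (1#2#rest))"
proof -
  let ?inner = "1#2#rest"
  have vm: "\<forall>(u,v,w)\<in>set ds. v \<noteq> m \<and> w \<noteq> m" using rng mM by auto
  have Sm: "\<forall>S\<in>set (map Sl ds). m \<notin> S" using vm by (auto simp: Sl_def)
  have SM: "\<forall>S\<in>set (map Sl ds). S \<subseteq> {1..M}" using rng by (auto simp: Sl_def)
  have innerM: "set ?inner \<subseteq> {1..M}" using g by (simp add: goodl_def)
  have tr_eq: "tr None ([1,2] @ blk m ds @ ?inner) None =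
      [(1,{2}),(2,{1,m})] @ BL m 2 ds @ ((1,{m,2}) # tr (Some 1) (2#rest) None)"
    apply (subst tr_app, simp, simp)
    apply (subst tr_app, simp, simp)
    apply (simp add: hd_blk last_blk blk_tr[OF ch, simplified])
    apply (cases rest) apply (auto simp: insert_commute)
    done
  have tri: "tr None ?inner None = (1,{2}) # tr (Some 1) (2#rest) None"
    by (cases rest) auto
  have dtail: "distinct (tr (Some 1) (2#rest) None)" and n12: "(1,{2}) \<notin> set (tr (Some 1) (2#rest) None)"
    using g unfolding goodl_def tri by auto
  have tailM: "\<And>p. p \<in> set (tr (Some 1) (2#rest) None) \<Longrightarrow> fst p \<noteq> m \<and> m \<notin> snd p"
  proof -
    fix p assume "p \<in> set (tr (Some 1) (2#rest) None)"
    from tr_set[OF this] have "fst p \<in> set (2#rest)" "snd p \<subseteq> set (2#rest) \<union> {1}" by auto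
    then have "fst p \<in> {1..M}" "snd p \<subseteq> {1..M}" using innerM M2 by auto
    then show "fst p \<noteq> m \<and> m \<notin> snd p" using mM by auto
  qed
  have dBL: "distinct (BL m 2 ds)" using BL_distinct[OF dT dS vm] .
  have BLm: "\<And>p. p \<in> set (BL m 2 ds) \<Longrightarrow> fst p = m \<or> m \<in> snd p"
    using BL_mem Sm by fastforce
  have m3: "m \<ge> 3" using mM M2 by simp
  have a1: "(2,{1,m}) \<notin> set (BL m 2 ds)"
  proof
    assume "(2,{1,m}) \<in> set (BL m 2 ds)"
    from BL_mem[OF this Sm] m3 obtain S where S: "S \<in> set (map Sl ds)" "2 \<in> S" "{1,m} = insert m (S - {2})"
      by auto
    have "m \<notin> S" using Sm S(1) by auto
    then have "S - {2} = insert m (S - {2}) - {m}" by auto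
    also have "\<dots> = {1,m} - {m}" using S(3) by simp
    also have "\<dots> = {1}" using m3 by auto
    finally have "S - {2} = {1}" .
    then have "S = {1,2}" using S(2) by auto
    then show False using S12 S(1) by simp
  qed
  have a2: "(1,{m,2}) \<notin> set (BL m 2 ds)"
  proof
    assume "(1,{m,2}) \<in> set (BL m 2 ds)"
    from BL_mem[OF this Sm] m3 obtain S where S: "S \<in> set (map Sl ds)" "1 \<in> S" "{m,2} = insert m (S - {1})"
      by auto
    have "m \<notin> S" using Sm S(1) by auto
    then have "S - {1} = insert m (S - {1}) - {m}" by auto
    also have "\<dots> = {m,2} - {m}" using S(3) by simp
    also have "\<dots> = {2}" using m3 by auto
    finally have "S - {1} = {2}" .
    then have "S = {1,2}" using S(2) by auto
    then show False using S12 S(1) by simp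
  qed
  have a3: "(1,{2}) \<notin> set (BL m 2 ds)" using BLm m3 by fastforce
  have dist: "distinct (tr None ([1,2] @ blk m ds @ ?inner) None)"
    unfolding tr_eq using dBL dtail a1 a2 a3 n12 BLm tailM m3 by fastforce
  have sinner: "successively (\<noteq>) ?inner" using g by (simp add: goodl_def)
  have sblk: "successively (\<noteq>) (blk m ds)" using blk_succ[OF vm] .
  have s1: "successively (\<noteq>) (blk m ds @ ?inner)"
    using sinner sblk m3 by (subst successively_append_iff) (simp add: last_blk)
  have hb: "hd (blk m ds @ ?inner) = m" by (simp add: hd_blk)
  have succ: "successively (\<noteq>) ([1,2] @ blk m ds @ ?inner)"
    using s1 hb m3 by (simp add: successively_Cons)
  have "set (blk m ds) \<subseteq> {1..m}" using blk_set[of m ds] rng mM by fastforce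
  then have "set ([1,2] @ blk m ds @ ?inner) \<subseteq> {1..m}" using innerM mM by auto
  then show ?thesis using dist succ by (simp add: goodl_def)
qed

definition Ep :: "nat \<Rightarrow> nat \<Rightarrow> nat list" where
  "Ep M x = (if x = 2 then [] else [1]) @ [x+2..<M+1]"
definition Ek :: "nat \<Rightarrow> nat \<Rightarrow> nat list" where
  "Ek M x = Ep M x @ (if x < M then [x+1] else [])"

fun Rd :: "nat \<Rightarrow> nat \<Rightarrow> nat \<Rightarrow> nat \<Rightarrow> (nat\<times>nat\<times>nat) list" where
  "Rd M j 0 x = map (\<lambda>y. (x,y,x)) (take j (Ek M x))"
| "Rd M j (Suc d) x = map (\<lambda>y. (x,y,x)) (Ep M x) @ [(x,x+1,x+1)] @ Rd M j d (x+1) @ [(x+1,x+1,x)]"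

lemma chain_app: "chain e (xs @ ys) = (chain e xs \<and> chain (endp e xs) ys)"
  by (induction e xs rule: chain.induct) auto
lemma endp_app: "endp e (xs @ ys) = endp (endp e xs) ys"
  by (induction e xs rule: endp.induct) auto

lemma chain_exc: "chain x (map (\<lambda>y. (x,y,x)) ys) \<and> endp x (map (\<lambda>y. (x,y,x)) ys) = x"
  by (induction ys) auto

lemma Rd_chain: "chain x (Rd M j d x) \<and> endp x (Rd M j d x) = x"
  by (induction d arbitrary: x) (auto simp: chain_app endp_app chain_exc)

lemma upt_set': "set [x+2..<M+1] = {x+2..M}"
  by (simp only: set_upt flip: Suc_eq_plus1 atLeastLessThanSuc_atLeastAtMost)
lemma Ep_set: "set (Ep M x) = (if x = 2 then {} else {1}) \<union> {x+2..M}"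
  unfolding Ep_def set_append upt_set' by simp
lemma Ek_set: "set (Ek M x) = set (Ep M x) \<union> (if x < M then {x+1} else {})"
  unfolding Ek_def by (cases "x < M") simp_all
lemma Ep_distinct: "distinct (Ep M x)"
  unfolding Ep_def distinct_append by (simp only: distinct_upt) (auto simp del: upt_Suc)
lemma Ek_distinct: "x \<noteq> 0 \<Longrightarrow> distinct (Ek M x)"
proof -
  assume "x \<noteq> 0"
  then have "x + 1 \<notin> set (Ep M x)" unfolding Ep_set by auto
  then show ?thesis unfolding Ek_def using Ep_distinct[of M x] by (cases "x < M") auto
qed
lemma Ep_length: "length (Ep M x) = (if x = 2 then 0 else 1) + (M + 1 - (x + 2))"
  unfolding Ep_def length_append by (simp only: length_upt) simp
lemma Ek_length: "length (Ek M x) = length (Ep M x) + (if x < M then 1 else 0)"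
  unfolding Ek_def by (cases "x < M") simp_all

definition invE :: "nat \<Rightarrow> nat \<Rightarrow> nat set \<Rightarrow> bool" where
  "invE M x E \<longleftrightarrow> E \<subseteq> insert 1 {x..M} \<and> E \<noteq> {} \<and> (\<forall>z. E = {z} \<longrightarrow> x < z)"

lemma distinct_pairs: "distinct ys \<Longrightarrow> x \<notin> set ys \<Longrightarrow> distinct (map (\<lambda>y. {x,y}) ys)"
  by (induction ys) auto
lemma distinct_pairs': "distinct ys \<Longrightarrow> x \<notin> set ys \<Longrightarrow> distinct (map (\<lambda>y. {y,x}) ys)"
  by (induction ys) (auto simp: insert_commute doubleton_eq_iff)

lemma Rd_props:
  assumes "2 \<le> x" "x + d \<le> M"
  shows "distinct (map Tl (Rd M j d x)) \<and> distinct (map Sl (Rd M j d x)) \<and>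
         (\<forall>E\<in>set (map Tl (Rd M j d x)) \<union> set (map Sl (Rd M j d x)). invE M x E)"
  using assms
proof (induction d arbitrary: x)
  case 0
  have "x \<notin> set (Ek M x)" using 0 unfolding Ek_set Ep_set by auto
  then have nx: "x \<notin> set (take j (Ek M x))" using in_set_takeD by metis
  have dt: "distinct (take j (Ek M x))" using Ek_distinct 0 by simp
  have mT: "map Tl (Rd M j 0 x) = map (\<lambda>y. {x,y}) (take j (Ek M x))" by (simp add: Tl_def)
  have mS: "map Sl (Rd M j 0 x) = map (\<lambda>y. {y,x}) (take j (Ek M x))" by (simp add: Sl_def)
  have "set (Ek M x) \<subseteq> insert 1 {x+1..M}" unfolding Ek_set Ep_set by auto
  then have sub: "set (take j (Ek M x)) \<subseteq> insert 1 {x+1..M}"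
    using set_take_subset[of j "Ek M x"] by blast
  have "\<forall>E\<in>set (map Tl (Rd M j 0 x)) \<union> set (map Sl (Rd M j 0 x)). invE M x E"
    unfolding mT mS invE_def using sub nx 0 by (auto simp: doubleton_eq_iff)
  moreover have "distinct (map Tl (Rd M j 0 x))" unfolding mT by (rule distinct_pairs[OF dt nx])
  moreover have "distinct (map Sl (Rd M j 0 x))" unfolding mS by (rule distinct_pairs'[OF dt nx])
  ultimately show ?case by blast
next
  case (Suc d)
  have IH: "distinct (map Tl (Rd M j d (x+1))) \<and> distinct (map Sl (Rd M j d (x+1))) \<and>
         (\<forall>E\<in>set (map Tl (Rd M j d (x+1))) \<union> set (map Sl (Rd M j d (x+1))). invE M (x+1) E)"
    using Suc by simp
  have nx: "x \<notin> set (Ep M x)" "x+1 \<notin> set (Ep M x)" using Ep_set Suc.prems by auto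
  have sub: "set (Ep M x) \<subseteq> insert 1 {x+2..M}" using Ep_set by auto
  have mT: "map Tl (Rd M j (Suc d) x) = map (\<lambda>y. {x,y}) (Ep M x) @ [{x,x+1}] @
       map Tl (Rd M j d (x+1)) @ [{x+1}]" by (simp add: Tl_def)
  have mS: "map Sl (Rd M j (Suc d) x) = map (\<lambda>y. {y,x}) (Ep M x) @ [{x+1}] @
       map Sl (Rd M j d (x+1)) @ [{x+1,x}]" by (simp add: Sl_def)
  have notin: "\<And>E. E \<in> set (map Tl (Rd M j d (x+1))) \<union> set (map Sl (Rd M j d (x+1))) \<Longrightarrow>
      x \<notin> E \<and> E \<noteq> {x+1}"
  proof -
    fix E assume "E \<in> set (map Tl (Rd M j d (x+1))) \<union> set (map Sl (Rd M j d (x+1)))"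
    then have "invE M (x+1) E" using IH by blast
    then show "x \<notin> E \<and> E \<noteq> {x+1}" using Suc.prems unfolding invE_def by auto
  qed
  have invs: "\<And>E. E \<in> set (map Tl (Rd M j d (x+1))) \<union> set (map Sl (Rd M j d (x+1))) \<Longrightarrow> invE M x E"
  proof -
    fix E assume "E \<in> set (map Tl (Rd M j d (x+1))) \<union> set (map Sl (Rd M j d (x+1)))"
    then have "invE M (x+1) E" using IH by blast
    then show "invE M x E" unfolding invE_def by auto
  qed
  have A: "distinct (map Tl (Rd M j (Suc d) x))"
    unfolding mT using distinct_pairs[OF Ep_distinct nx(1)] IH notin nx by (auto simp: doubleton_eq_iff)
  have B: "distinct (map Sl (Rd M j (Suc d) x))"
    unfolding mS using distinct_pairs'[OF Ep_distinct nx(1)] IH notin nx by (auto simp: insert_commute doubleton_eq_iff)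
  have C: "\<forall>E\<in>set (map Tl (Rd M j (Suc d) x)) \<union> set (map Sl (Rd M j (Suc d) x)). invE M x E"
    unfolding mT mS using invs sub nx Suc.prems by (auto simp: invE_def doubleton_eq_iff)
  show ?case using A B C by blast
qed

definition Wk :: "nat \<Rightarrow> nat \<Rightarrow> nat \<Rightarrow> nat \<Rightarrow> (nat\<times>nat\<times>nat) list" where
  "Wk M K j b = (if 1 \<le> b then [(2,2,2)] else []) @ Rd M j (K-2) 2 @ (if b = 2 then [(2,1,1)] else [])"

lemma Rd_no12: "3 \<le> M \<Longrightarrow> d \<le> M - 2 \<Longrightarrow> {1,2} \<notin> set (map Tl (Rd M j d 2)) \<union> set (map Sl (Rd M j d 2))"
proof (cases d)
  case 0
  assume "3 \<le> M"
  have "\<forall>y\<in>set (Ek M 2). y \<noteq> 1 \<and> y \<noteq> 2"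
    unfolding Ek_set Ep_set by auto
  then have "\<forall>y\<in>set (take j (Ek M 2)). y \<noteq> 1 \<and> y \<noteq> 2"
    using in_set_takeD by metis
  then show ?thesis using 0 by (auto simp: Tl_def Sl_def doubleton_eq_iff)
next
  case (Suc d')
  assume a: "3 \<le> M" "d \<le> M - 2"
  have al: "\<forall>E\<in>set (map Tl (Rd M j d' 3)) \<union> set (map Sl (Rd M j d' 3)). invE M 3 E"
    using Rd_props[of 3 d' M j] a Suc by auto
  have i: "{1,2} \<notin> set (map Tl (Rd M j d' 3)) \<union> set (map Sl (Rd M j d' 3))"
  proof
    assume "{1,2} \<in> set (map Tl (Rd M j d' 3)) \<union> set (map Sl (Rd M j d' 3))"
    then have "invE M 3 {1,2}" using al by blast
    then show False unfolding invE_def by auto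
  qed
  have "\<forall>y\<in>set (Ep M 2). y \<noteq> 1 \<and> y \<noteq> 2" using Ep_set[of M 2] by auto
  then show ?thesis using i Suc by (auto simp: Tl_def Sl_def doubleton_eq_iff numeral_3_eq_3)
qed

lemma W_props:
  assumes M: "3 \<le> M" and K: "2 \<le> K" "K \<le> M" and b: "b \<le> 2"
  shows "chain 2 (Wk M K j b) \<and> distinct (map Tl (Wk M K j b) @ [{endp 2 (Wk M K j b), 1}]) \<and>
     distinct (map Sl (Wk M K j b)) \<and> {1,2} \<notin> set (map Sl (Wk M K j b)) \<and>
     (\<forall>(u,v,w)\<in>set (Wk M K j b). v \<in> {1..M} \<and> w \<in> {1..M})"
proof -
  let ?R = "Rd M j (K-2) 2"
  have P: "distinct (map Tl ?R) \<and> distinct (map Sl ?R) \<and>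
         (\<forall>E\<in>set (map Tl ?R) \<union> set (map Sl ?R). invE M 2 E)"
    using Rd_props[of 2 "K-2" M j] K by simp
  have n12: "{1,2} \<notin> set (map Tl ?R) \<union> set (map Sl ?R)" using Rd_no12[of M "K-2" j] M K by simp
  have ch: "chain 2 ?R" "endp 2 ?R = 2" using Rd_chain[of 2 M j "K-2"] by auto
  have PI: "\<And>E. E \<in> set (map Tl ?R) \<union> set (map Sl ?R) \<Longrightarrow> invE M 2 E"
    using P by blast
  have loops: "\<And>z. {z} \<in> set (map Tl ?R) \<union> set (map Sl ?R) \<Longrightarrow> 2 < z"
  proof -
    fix z assume "{z} \<in> set (map Tl ?R) \<union> set (map Sl ?R)"
    from PI[OF this] show "2 < z" unfolding invE_def by simp
  qed
  have rng: "\<forall>(u,v,w)\<in>set ?R. v \<in> {1..M} \<and> w \<in> {1..M}"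
  proof (intro ballI, clarify)
    fix u v w assume "(u,v,w) \<in> set ?R"
    then have "Sl (u,v,w) \<in> Sl ` set ?R" by (rule imageI)
    then have "{v,w} \<in> set (map Sl ?R)" unfolding set_map Sl_def by simp
    then have "invE M 2 {v,w}" using PI by blast
    then have "{v,w} \<subseteq> insert 1 {2..M}" unfolding invE_def by blast
    then show "v \<in> {1..M} \<and> w \<in> {1..M}" using M by auto
  qed
  have n21: "{2,1} \<notin> set (map Tl ?R)" using n12 by (simp add: insert_commute)
  have M1: "1 \<le> M" "2 \<le> M" using M by auto
  have "b = 0 \<or> b = 1 \<or> b = 2" using b by auto
  then show ?thesis
  proof (elim disjE)
    assume b0: "b = 0"
    then have W: "Wk M K j b = ?R" by (simp add: Wk_def)
    show ?thesis unfolding W using P n12 n21 ch rng by auto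
  next
    assume b1: "b = 1"
    then have W: "Wk M K j b = [(2,2,2)] @ ?R" by (simp add: Wk_def)
    have "{2} \<notin> set (map Tl ?R)" "{2} \<notin> set (map Sl ?R)" using loops by auto
    then show ?thesis unfolding W using P n12 n21 ch rng M1 by (auto simp: Tl_def Sl_def)
  next
    assume b2: "b = 2"
    then have W: "Wk M K j b = [(2,2,2)] @ ?R @ [(2,1,1)]" by (simp add: Wk_def)
    have "{2} \<notin> set (map Tl ?R)" "{2} \<notin> set (map Sl ?R)" "{1} \<notin> set (map Tl ?R)" "{1} \<notin> set (map Sl ?R)"
      using loops by fastforce+
    then show ?thesis unfolding W using P n12 n21 ch rng M1
      by (auto simp: Tl_def Sl_def chain_app endp_app insert_commute)
  qed
qed

definition cst :: "(nat\<times>nat\<times>nat) list \<Rightarrow> nat" where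
  "cst ds = sum_list (map (\<lambda>(u,v,w). 1 + length (seg v w)) ds)"

lemma cst_app: "cst (xs @ ys) = cst xs + cst ys" by (simp add: cst_def)
lemma cst_Cons: "cst ((u,v,w) # ds) = 1 + length (seg v w) + cst ds" by (simp add: cst_def)
lemma cst_Nil: "cst [] = 0" by (simp add: cst_def)

lemma blk_len: "length (blk m ds) = cst ds + 1"
  by (induction ds) (auto simp: blk_def cst_def)

lemma cst_exc: "x \<notin> set ys \<Longrightarrow> cst (map (\<lambda>y. (x,y,x)) ys) = 3 * length ys"
  by (induction ys) (auto simp: cst_def seg_def)

fun P :: "nat \<Rightarrow> nat \<Rightarrow> nat \<Rightarrow> nat \<Rightarrow> nat" where
  "P M j 0 x = 3 * min j (length (Ek M x))"
| "P M j (Suc d) x = 3 * length (Ep M x) + 5 + P M j d (x+1)"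

lemma cst_Rd: "2 \<le> x \<Longrightarrow> cst (Rd M j d x) = P M j d x"
proof (induction d arbitrary: x)
  case 0
  have "x \<notin> set (Ek M x)" using 0 unfolding Ek_set Ep_set by auto
  then have "x \<notin> set (take j (Ek M x))" using in_set_takeD by metis
  then show ?case by (simp add: cst_exc)
next
  case (Suc d)
  have "x \<notin> set (Ep M x)" using Suc.prems unfolding Ep_set by auto
  then show ?case using Suc by (simp add: cst_app cst_exc cst_Cons cst_Nil seg_def)
qed

definition Bv :: "nat \<Rightarrow> nat \<Rightarrow> nat \<Rightarrow> nat \<Rightarrow> nat" where
  "Bv M K j b = 1 + 2 * b + P M j (K-2) 2"

lemma blk_Wk_len: "b \<le> 2 \<Longrightarrow> length (blk m (Wk M K j b)) = Bv M K j b"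
proof -
  assume b: "b \<le> 2"
  have c: "cst (Rd M j (K-2) 2) = P M j (K-2) 2" by (rule cst_Rd) simp
  have "b = 0 \<or> b = 1 \<or> b = 2" using b by auto
  then show ?thesis
    by (elim disjE) (simp_all add: Wk_def blk_len cst_app cst_Cons cst_Nil seg_def c Bv_def)
qed

lemma P_j: "j \<le> length (Ek M (x+d)) \<Longrightarrow> P M j d x = P M 0 d x + 3 * j"
  by (induction d arbitrary: x) auto

lemma P_step: "x + d < M \<Longrightarrow> P M 0 (Suc d) x = P M (length (Ek M (x+d))) d x + 2"
proof (induction d arbitrary: x)
  case 0
  then show ?case by (simp add: Ek_length)
next
  case (Suc d)
  then show ?case by simp
qed

lemma Ek_len_ge1: "3 \<le> x \<Longrightarrow> 1 \<le> length (Ek M x)"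
  by (simp add: Ek_length Ep_length)

lemma rep3: "(r::nat) \<noteq> 1 \<Longrightarrow> r \<le> 3*J+4 \<Longrightarrow> r \<noteq> 3*J+3 \<Longrightarrow> \<exists>j b. j \<le> J \<and> b \<le> 2 \<and> r = 3*j + 2*b"
proof -
  assume a: "r \<noteq> 1" "r \<le> 3*J+4" "r \<noteq> 3*J+3"
  have r: "r = 3 * (r div 3) + r mod 3" by simp
  have "r mod 3 < 3" by simp
  then consider "r mod 3 = 0" | "r mod 3 = 1" | "r mod 3 = 2" by linarith
  then show ?thesis
  proof cases
    case 1
    then have "r div 3 \<le> J" using a r by presburger
    then show ?thesis using 1 r by (intro exI[of _ "r div 3"] exI[of _ 0]) simp
  next
    case 2
    then have "r div 3 \<ge> 1" using a r by (cases "r div 3") auto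
    then have "r div 3 - 1 \<le> J" using a r 2 by linarith
    then show ?thesis using 2 r \<open>r div 3 \<ge> 1\<close> by (intro exI[of _ "r div 3 - 1"] exI[of _ 2]) auto
  next
    case 3
    then have "r div 3 \<le> J" using a r by presburger
    then show ?thesis using 3 r by (intro exI[of _ "r div 3"] exI[of _ 1]) simp
  qed
qed

definition Top :: "nat \<Rightarrow> nat \<Rightarrow> nat" where
  "Top M K = Bv M K (length (Ek M K)) 0"

definition achv :: "nat \<Rightarrow> nat \<Rightarrow> nat \<Rightarrow> bool" where
  "achv M K B \<longleftrightarrow> (\<exists>K' j b. 2 \<le> K' \<and> K' \<le> K \<and> j \<le> length (Ek M K') \<and> b \<le> 2 \<and> Bv M K' j b = B)"

lemma Bv_expand: "2 \<le> K \<Longrightarrow> j \<le> length (Ek M K) \<Longrightarrow> Bv M K j b = Bv M K 0 0 + 3*j + 2*b"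
proof -
  assume a: "2 \<le> K" "j \<le> length (Ek M K)"
  then obtain k where k: "K = Suc (Suc k)" by (metis add_2_eq_Suc le_Suc_ex)
  show ?thesis using P_j[of j M 2 k] a unfolding k by (simp add: Bv_def)
qed

lemma Bv_next: "2 \<le> K \<Longrightarrow> K < M \<Longrightarrow> Bv M (Suc K) 0 0 = Top M K + 2"
proof -
  assume a: "2 \<le> K" "K < M"
  then obtain k where k: "K = Suc (Suc k)" by (metis add_2_eq_Suc le_Suc_ex)
  show ?thesis using P_step[of 2 k M] a unfolding k by (simp add: Top_def Bv_def)
qed

lemma cover_K:
  assumes "3 \<le> M" "2 \<le> K" "K \<le> M"
  shows "\<forall>t \<le> Top M K + 5. t \<noteq> 1 \<and> t \<noteq> Top M K + 4 \<longrightarrow> achv M K (t+1) \<or> (t \<ge> 1 \<and> achv M K (t-1))"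
  using assms(2,3)
proof (induction K rule: dec_induct)
  case base
  let ?J = "length (Ek M 2)"
  have J1: "1 \<le> ?J" using assms(1) by (simp add: Ek_length Ep_length)
  have T: "Top M 2 = Bv M 2 0 0 + 3 * ?J" unfolding Top_def using Bv_expand[of 2 ?J M 0] by simp
  have B0: "Bv M 2 0 0 = 1" by (simp add: Bv_def)
  show ?case
  proof (intro allI impI)
    fix t assume t: "t \<le> Top M 2 + 5" "t \<noteq> 1 \<and> t \<noteq> Top M 2 + 4"
    show "achv M 2 (t+1) \<or> (t \<ge> 1 \<and> achv M 2 (t-1))"
    proof (cases "t = 0 \<or> t = 3")
      case True
      then obtain j where j: "j \<le> ?J" "t + 1 = 1 + 3 * j" using J1 by (metis mult_0_right le0 add.commute mult_1_right add_Suc_right numeral_3_eq_3 one_add_one plus_1_eq_Suc)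
      have "Bv M 2 j 0 = t + 1" using Bv_expand[of 2 j M 0] j B0 by simp
      then show ?thesis using j unfolding achv_def by (intro disjI1 exI[of _ 2] exI[of _ j] exI[of _ 0]) simp
    next
      case False
      then have "t - 2 \<noteq> 1" "t - 2 \<le> 3 * ?J + 4" "t - 2 \<noteq> 3 * ?J + 3" "t \<ge> 2"
        using t T B0 by auto
      from rep3[OF this(1-3)] obtain j b where jb: "j \<le> ?J" "b \<le> 2" "t - 2 = 3*j + 2*b" by blast
      have "Bv M 2 j b = t - 1" using Bv_expand[of 2 j M b] jb B0 \<open>t \<ge> 2\<close> by simp
      then show ?thesis using jb \<open>t \<ge> 2\<close> unfolding achv_def
        by (intro disjI2 conjI) (simp, rule exI[of _ 2], auto)
    qed
  qed
next
  case (step K)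
  let ?J = "length (Ek M (Suc K))"
  have K: "2 \<le> K" "K < M" using step by auto
  have J1: "1 \<le> ?J" using Ek_len_ge1[of "Suc K" M] K by simp
  have B0: "Bv M (Suc K) 0 0 = Top M K + 2" using Bv_next K by simp
  have T: "Top M (Suc K) = Top M K + 2 + 3 * ?J"
    using Bv_expand[of "Suc K" ?J M 0] B0 K by (simp add: Top_def[of M "Suc K"])
  have mono: "\<And>B. achv M K B \<Longrightarrow> achv M (Suc K) B" unfolding achv_def using le_SucI by blast
  show ?case
  proof (intro allI impI)
    fix t assume t: "t \<le> Top M (Suc K) + 5" "t \<noteq> 1 \<and> t \<noteq> Top M (Suc K) + 4"
    show "achv M (Suc K) (t+1) \<or> (t \<ge> 1 \<and> achv M (Suc K) (t-1))"
    proof (cases "t \<le> Top M K + 5 \<and> t \<noteq> Top M K + 4")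
      case True
      have IH: "\<forall>t \<le> Top M K + 5. t \<noteq> 1 \<and> t \<noteq> Top M K + 4 \<longrightarrow> achv M K (t+1) \<or> (t \<ge> 1 \<and> achv M K (t-1))"
        using step.IH K by simp
      then show ?thesis using True t mono by blast
    next
      case False
      show ?thesis
      proof (cases "t = Top M K + 4")
        case True
        have "Bv M (Suc K) 1 0 = t + 1" using Bv_expand[of "Suc K" 1 M 0] J1 B0 True K by simp
        then show ?thesis using J1 K unfolding achv_def
          by (intro disjI1 exI[of _ "Suc K"] exI[of _ 1] exI[of _ 0]) simp
      next
        case F2: False
        with False have tt: "t \<ge> Top M K + 6" by auto
        define r where "r = t - 1 - (Top M K + 2)"
        have "r \<noteq> 1" "r \<le> 3 * ?J + 4" "r \<noteq> 3 * ?J + 3" using t tt T unfolding r_def by auto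
        from rep3[OF this] obtain j b where jb: "j \<le> ?J" "b \<le> 2" "r = 3*j + 2*b" by blast
        have "Bv M (Suc K) j b = t - 1" using Bv_expand[of "Suc K" j M b] jb B0 tt K r_def by simp
        then show ?thesis using jb tt K unfolding achv_def
          by (intro disjI2 conjI) (simp, rule exI[of _ "Suc K"], auto)
      qed
    qed
  qed
qed

lemma Ek_MM: "3 \<le> M \<Longrightarrow> length (Ek M M) = 1"
  by (simp add: Ek_length Ep_length)

lemma P_closed: "3 \<le> x \<Longrightarrow> M - x = t \<Longrightarrow> x \<le> M \<Longrightarrow>
   2 * P M 1 t x = 3 * t * (t + 1) + 10 * t + 6"
proof (induction t arbitrary: x)
  case 0
  then have "x = M" by simp
  then show ?case using Ek_len_ge1[of M M] 0 by simp
next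
  case (Suc t)
  have IH: "2 * P M 1 t (x+1) = 3 * t * (t + 1) + 10 * t + 6" using Suc by simp
  have L: "length (Ep M x) = 1 + t" using Suc.prems by (simp add: Ep_length)
  show ?case using IH L by (simp add: algebra_simps)
qed

definition Bf :: "nat \<Rightarrow> nat" where "Bf M = Bv M M (length (Ek M M)) 2"

lemma Bf_closed: "3 \<le> M \<Longrightarrow> 2 * Bf M + 4 = M * (3 * M + 1)"
proof -
  assume M: "3 \<le> M"
  then obtain s where s: "M = s + 3" by (metis add.commute le_Suc_ex)
  have "M - 2 = Suc (M - 3)" using M by simp
  then have P2: "P M 1 (M - 2) 2 = 3 * length (Ep M 2) + 5 + P M 1 (M - 3) 3" by simp
  have L: "length (Ep M 2) = s" using s by (simp add: Ep_length)
  have P3: "2 * P M 1 s 3 = 3 * s * (s + 1) + 10 * s + 6" using P_closed[of 3 M s] s by simp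
  have "2 * Bf M + 4 = 14 + 2 * P M 1 (M - 2) 2" using Ek_MM[OF M] by (simp add: Bf_def Bv_def)
  also have "\<dots> = 24 + 6 * s + 2 * P M 1 s 3" using P2 L s by simp
  also have "\<dots> = M * (3 * M + 1)" using P3 s by (simp add: algebra_simps)
  finally show ?thesis .
qed

definition NN :: "nat \<Rightarrow> nat" where "NN k = (k^3 - k^2) div 2"

lemma cube_sub: "(k::nat)^3 - k^2 = k * k * (k - 1)"
  by (simp add: power2_eq_square power3_eq_cube diff_mult_distrib2 algebra_simps)

lemma NN2: "2 * NN k = k^3 - k^2"
proof -
  have "even (k * k * (k - 1))" by (cases "even k") auto
  then show ?thesis unfolding NN_def cube_sub by simp
qed

lemma NN_Suc: "3 \<le> M \<Longrightarrow> NN (Suc M) = NN M + Bf M + 2"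
proof -
  assume M: "3 \<le> M"
  have a: "2 * NN (Suc M) = Suc M * Suc M * M" using NN2[of "Suc M"] cube_sub[of "Suc M"] by simp
  have b: "2 * NN M = M * M * (M - 1)" using NN2[of M] cube_sub[of M] by simp
  obtain s where s: "M = s + 3" using M by (metis add.commute le_Suc_ex)
  have c: "Suc M * Suc M * M = M * M * (M - 1) + M * (3 * M + 1)"
    unfolding s by (simp add: algebra_simps)
  have "2 * NN (Suc M) = 2 * NN M + (2 * Bf M + 4)"
    using a b c Bf_closed[OF M] by simp
  then show ?thesis by simp
qed

lemma NN3: "NN 3 = 9" by (simp add: NN_def)

lemma Top_Bf: "3 \<le> M \<Longrightarrow> Bf M = Top M M + 4"
  using Bv_expand[of M "length (Ek M M)" M 2] Bv_expand[of M "length (Ek M M)" M 0]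
  by (simp add: Bf_def Top_def)

lemma Bf_ge: "3 \<le> M \<Longrightarrow> 13 \<le> Bf M"
proof -
  assume M: "3 \<le> M"
  have "3 * M + 1 \<ge> 10" using M by simp
  then have "M * (3 * M + 1) \<ge> 3 * 10" using M mult_le_mono by blast
  then show ?thesis using Bf_closed[OF M] by simp
qed

lemma NN_ge: "3 \<le> M \<Longrightarrow> 9 \<le> NN M"
proof (induction M rule: dec_induct)
  case base then show ?case by (simp add: NN3)
next
  case (step M) then show ?case using NN_Suc[of M] by simp
qed

definition ends12 :: "nat list \<Rightarrow> bool" where
  "ends12 G \<longleftrightarrow> drop (length G - 2) G = [1,2]"

lemma build:
  assumes M: "3 \<le> M" and K: "2 \<le> K" "K \<le> M" and b: "b \<le> 2"
    and Gi: "length Gi = k" "goodl M Gi" "take 2 Gi = [1,2]"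
  shows "\<exists>G. length G = 2 + Bv M K j b + k \<and> goodl (Suc M) G \<and> take 3 G = [1,2,Suc M] \<and>
             (ends12 Gi \<longrightarrow> ends12 G)"
proof -
  obtain rest where r: "Gi = 1#2#rest" using Gi(3)
    by (cases Gi; cases "tl Gi") auto
  have WP: "chain 2 (Wk M K j b) \<and> distinct (map Tl (Wk M K j b) @ [{endp 2 (Wk M K j b), 1}]) \<and>
     distinct (map Sl (Wk M K j b)) \<and> {1,2} \<notin> set (map Sl (Wk M K j b)) \<and>
     (\<forall>(u,v,w)\<in>set (Wk M K j b). v \<in> {1..M} \<and> w \<in> {1..M})"
    using W_props[OF M K b] by blast
  let ?G = "[1,2] @ blk (Suc M) (Wk M K j b) @ (1#2#rest)"
  have g: "goodl (Suc M) ?G"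
    using step_glue[of M rest "Suc M" "Wk M K j b"] Gi(2) r WP M by auto
  have l: "length ?G = 2 + Bv M K j b + k" using blk_Wk_len[OF b] Gi(1) r by simp
  have t: "take 3 ?G = [1,2,Suc M]"
  proof -
    obtain y ys where "blk (Suc M) (Wk M K j b) = y # ys" using blk_ne by (cases "blk (Suc M) (Wk M K j b)") auto
    moreover have "y = Suc M" using hd_blk[of "Suc M" "Wk M K j b"] calculation by simp
    ultimately show ?thesis by simp
  qed
  have e: "ends12 Gi \<longrightarrow> ends12 ?G"
    unfolding ends12_def r by simp
  show ?thesis using g l t e r by blast
qed

definition QQ :: "nat \<Rightarrow> bool" where
  "QQ M \<longleftrightarrow> (\<forall>k \<in> {NN M, NN M - 1, NN M - 2, NN M - 4}. \<exists>G. length G = k \<and> goodl M G \<and>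
        take 2 G = [1,2] \<and> (k \<noteq> NN M - 1 \<longrightarrow> ends12 G))"

lemma step_main:
  assumes M: "3 \<le> M" and Q: "QQ M" and n: "NN M < n" "n \<le> NN (Suc M)"
  shows "\<exists>G. length G = n \<and> goodl (Suc M) G \<and> take 3 G = [1,2,Suc M] \<and>
           (n \<noteq> NN (Suc M) - 1 \<longrightarrow> ends12 G)"
proof -
  let ?N = "NN M"
  have N9: "9 \<le> ?N" using NN_ge[OF M] .
  have NS: "NN (Suc M) = ?N + Bf M + 2" using NN_Suc[OF M] .
  have Bf13: "13 \<le> Bf M" using Bf_ge[OF M] .
  define t where "t = n - ?N - 1"
  have tB: "t \<le> Bf M + 1" using n NS unfolding t_def by simp
  have nt: "n = ?N + 1 + t" using n unfolding t_def by simp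
  have inner: "\<And>k. k \<in> {?N, ?N - 1, ?N - 2, ?N - 4} \<Longrightarrow> \<exists>G. length G = k \<and> goodl M G \<and>
        take 2 G = [1,2] \<and> (k \<noteq> ?N - 1 \<longrightarrow> ends12 G)"
    using Q unfolding QQ_def by blast
  consider "t = 1" | "t = Bf M" | "t \<noteq> 1" "t \<noteq> Bf M" by blast
  then show ?thesis
  proof cases
    case 1
    obtain Gi where Gi: "length Gi = ?N - 4" "goodl M Gi" "take 2 Gi = [1,2]" "ends12 Gi"
      using inner[of "?N - 4"] N9 by auto
    have B: "Bv M 2 1 0 = 4" using Ek_len_ge1[of 3 M] M by (simp add: Bv_def Ek_length Ep_length)
    from build[OF M _ _ _ Gi(1-3), of 2 0 1] M B obtain G where
      "length G = 2 + 4 + (?N - 4)" "goodl (Suc M) G" "take 3 G = [1,2,Suc M]" "ends12 G"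
      using Gi(4) by auto
    then show ?thesis using nt 1 N9 by (intro exI[of _ G]) auto
  next
    case 2
    obtain Gi where Gi: "length Gi = ?N - 1" "goodl M Gi" "take 2 Gi = [1,2]"
      using inner[of "?N - 1"] by auto
    from build[OF M _ _ _ Gi(1-3), of M 2 "length (Ek M M)"] M obtain G where
      "length G = 2 + Bf M + (?N - 1)" "goodl (Suc M) G" "take 3 G = [1,2,Suc M]"
      unfolding Bf_def by auto
    then show ?thesis using nt 2 N9 NS by (intro exI[of _ G]) auto
  next
    case 3
    have tt: "t \<le> Top M M + 5" "t \<noteq> 1 \<and> t \<noteq> Top M M + 4" using 3 tB Top_Bf[OF M] by auto
    have "achv M M (t+1) \<or> (t \<ge> 1 \<and> achv M M (t-1))"
      using cover_K[OF M _ order_refl] M tt by auto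
    then show ?thesis
    proof
      assume "achv M M (t+1)"
      then obtain K j b where Kjb: "2 \<le> K" "K \<le> M" "b \<le> 2" "Bv M K j b = t + 1"
        unfolding achv_def by blast
      obtain Gi where Gi: "length Gi = ?N - 2" "goodl M Gi" "take 2 Gi = [1,2]" "ends12 Gi"
        using inner[of "?N - 2"] N9 by auto
      from build[OF M Kjb(1-3) Gi(1-3), of j] Kjb(4) Gi(4) obtain G where
        "length G = 2 + (t + 1) + (?N - 2)" "goodl (Suc M) G" "take 3 G = [1,2,Suc M]" "ends12 G"
        by auto
      then show ?thesis using nt N9 by (intro exI[of _ G]) auto
    next
      assume "t \<ge> 1 \<and> achv M M (t-1)"
      then obtain K j b where Kjb: "2 \<le> K" "K \<le> M" "b \<le> 2" "Bv M K j b = t - 1" "t \<ge> 1"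
        unfolding achv_def by blast
      obtain Gi where Gi: "length Gi = ?N" "goodl M Gi" "take 2 Gi = [1,2]" "ends12 Gi"
        using inner[of "?N"] N9 by auto
      from build[OF M Kjb(1-3) Gi(1-3), of j] Kjb(4) Gi(4) obtain G where
        "length G = 2 + (t - 1) + ?N" "goodl (Suc M) G" "take 3 G = [1,2,Suc M]" "ends12 G"
        by auto
      then show ?thesis using nt N9 Kjb(5) by (intro exI[of _ G]) auto
    qed
  qed
qed

lemma QQ3: "QQ 3"
proof -
  have "goodl 3 [1,2,3,2,3,1,3,1,2]" "goodl 3 [1,2,1,3,1,3,2,3]" "goodl 3 [1,2,3,1,3,1,2]"
     "goodl 3 [1,2,3,1,2]" by (simp_all add: goodl_def)
  then show ?thesis unfolding QQ_def NN3
    apply (simp add: ends12_def)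
    apply (intro conjI)
       apply (rule exI[of _ "[1,2,3,2,3,1,3,1,2]"], simp)
      apply (rule exI[of _ "[1,2,1,3,1,3,2,3]"], simp)
     apply (rule exI[of _ "[1,2,3,1,3,1,2]"], simp)
    apply (rule exI[of _ "[1,2,3,1,2]"], simp)
    done
qed

lemma QQ_all: "3 \<le> M \<Longrightarrow> QQ M"
proof (induction M rule: dec_induct)
  case base then show ?case by (rule QQ3)
next
  case (step M)
  have NS: "NN (Suc M) = NN M + Bf M + 2" using NN_Suc[OF step.hyps(1)] .
  have B: "13 \<le> Bf M" using Bf_ge[OF step.hyps(1)] .
  show ?case unfolding QQ_def
  proof
    fix k assume k: "k \<in> {NN (Suc M), NN (Suc M) - 1, NN (Suc M) - 2, NN (Suc M) - 4}"
    then have "NN M < k" "k \<le> NN (Suc M)" using NS B by auto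
    from step_main[OF step.hyps(1) step.IH this] obtain G where
      "length G = k" "goodl (Suc M) G" "take 3 G = [1,2,Suc M]" "k \<noteq> NN (Suc M) - 1 \<longrightarrow> ends12 G"
      by blast
    moreover have "take 2 G = [1,2]" using calculation(3)
      by (metis One_nat_def Suc_1 numeral_3_eq_3 take_Suc_Cons take_take min_def le_SucI order_refl take_0)
    ultimately show "\<exists>G. length G = k \<and> goodl (Suc M) G \<and> take 2 G = [1,2] \<and>
        (k \<noteq> NN (Suc M) - 1 \<longrightarrow> ends12 G)" by blast
  qed
qed

lemma count_target:
  assumes "finite C"
  shows "2 * card (SIGMA c:C. {S. S \<subseteq> C - {c} \<and> card S = 1} \<union> {S. S \<subseteq> C - {c} \<and> card S = 2})
     = card C ^ 3 - card C ^ 2"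
proof -
  let ?k = "card C"
  have fin: "\<forall>c\<in>C. finite ({S. S \<subseteq> C - {c} \<and> card S = 1} \<union> {S. S \<subseteq> C - {c} \<and> card S = 2})"
    using assms by auto
  have each: "\<And>c. c \<in> C \<Longrightarrow> card ({S. S \<subseteq> C - {c} \<and> card S = 1} \<union> {S. S \<subseteq> C - {c} \<and> card S = 2})
      = (?k - 1) + ((?k - 1) choose 2)"
  proof -
    fix c assume c: "c \<in> C"
    have f: "finite (C - {c})" using assms by simp
    have cc: "card (C - {c}) = ?k - 1" using c assms by simp
    have "card ({S. S \<subseteq> C - {c} \<and> card S = 1} \<union> {S. S \<subseteq> C - {c} \<and> card S = 2}) =
        card {S. S \<subseteq> C - {c} \<and> card S = 1} + card {S. S \<subseteq> C - {c} \<and> card S = 2}"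
      by (rule card_Un_disjoint) (use f in auto)
    also have "\<dots> = (?k - 1) + ((?k - 1) choose 2)" using n_subsets[OF f, of 1] n_subsets[OF f, of 2] cc by simp
    finally show "card ({S. S \<subseteq> C - {c} \<and> card S = 1} \<union> {S. S \<subseteq> C - {c} \<and> card S = 2})
      = (?k - 1) + ((?k - 1) choose 2)" .
  qed
  have "card (SIGMA c:C. {S. S \<subseteq> C - {c} \<and> card S = 1} \<union> {S. S \<subseteq> C - {c} \<and> card S = 2})
      = ?k * ((?k - 1) + ((?k - 1) choose 2))"
    using card_SigmaI[OF assms fin] each by simp
  moreover have "2 * ((?k - 1) + ((?k - 1) choose 2)) = ?k * (?k - 1)"
  proof (cases ?k)
    case 0 then show ?thesis by simp
  next
    case (Suc q)
    have "even (q * (q - 1))"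
    proof (cases "even q")
      case True then show ?thesis by simp
    next
      case False then have "even (q - 1)" by (cases q) auto
      then show ?thesis by simp
    qed
    then have "2 * (q * (q - 1) div 2) = q * (q - 1)" by simp
    then show ?thesis using Suc by (cases q) (simp_all add: choose_two algebra_simps)
  qed
  ultimately have "2 * card (SIGMA c:C. {S. S \<subseteq> C - {c} \<and> card S = 1} \<union> {S. S \<subseteq> C - {c} \<and> card S = 2})
      = ?k * (?k * (?k - 1))" by (metis mult.left_commute)
  then show ?thesis using cube_sub[of ?k] by (simp add: mult.assoc)
qed

lemma lower_bound:
  assumes n: "2 \<le> n" and C: "finite C" "f ` path_V n \<subseteq> C"
    and prp: "\<forall>u\<in>path_V n. \<forall>v\<in>path_V n. path_E u v \<longrightarrow> f u \<noteq> f v"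
    and loc: "\<forall>u\<in>path_V n. \<forall>v\<in>path_V n. u \<noteq> v \<and> f u = f v \<longrightarrow>
          f ` nbhd path_E (path_V n) u \<noteq> f ` nbhd path_E (path_V n) v"
  shows "2 * n \<le> card C ^ 3 - card C ^ 2"
proof -
  let ?V = "path_V n"
  let ?T = "SIGMA c:C. {S. S \<subseteq> C - {c} \<and> card S = 1} \<union> {S. S \<subseteq> C - {c} \<and> card S = 2}"
  define \<phi> where "\<phi> v = (f v, f ` nbhd path_E ?V v)" for v
  have inj: "inj_on \<phi> ?V" unfolding inj_on_def \<phi>_def using loc by auto
  have sub: "\<phi> ` ?V \<subseteq> ?T"
  proof
    fix p assume "p \<in> \<phi> ` ?V"
    then obtain v where v: "v \<in> ?V" "p = \<phi> v" by auto
    let ?S = "f ` nbhd path_E ?V v"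
    have nb: "nbhd path_E ?V v \<subseteq> {v - 1, v + 1}"
      unfolding nbhd_def path_E_def by auto
    have ne: "nbhd path_E ?V v \<noteq> {}"
    proof (cases "v < n")
      case True then have "v + 1 \<in> nbhd path_E ?V v" using v by (auto simp: nbhd_def path_E_def path_V_def)
      then show ?thesis by auto
    next
      case False then have "v - 1 \<in> nbhd path_E ?V v" using v n by (auto simp: nbhd_def path_E_def path_V_def)
      then show ?thesis by auto
    qed
    have c2: "card ?S \<le> 2"
    proof -
      have "card ?S \<le> card (nbhd path_E ?V v)" by (rule card_image_le) (use nb in \<open>auto intro: finite_subset\<close>)
      also have "\<dots> \<le> card {v - 1, v + 1}" by (rule card_mono) (use nb in auto)
      also have "\<dots> \<le> 2" by (simp add: card_insert_le_m1)
      finally show ?thesis .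
    qed
    have c1: "card ?S \<ge> 1"
    proof -
      have "finite ?S" using nb by (auto intro: finite_subset)
      moreover have "?S \<noteq> {}" using ne by simp
      ultimately show ?thesis by (simp add: Suc_le_eq card_gt_0_iff)
    qed
    have sC: "?S \<subseteq> C - {f v}"
    proof
      fix c assume "c \<in> ?S"
      then obtain u where u: "u \<in> nbhd path_E ?V v" "c = f u" by auto
      then have "u \<in> ?V" "path_E v u" by (auto simp: nbhd_def)
      then have "f v \<noteq> f u" using prp v(1) by blast
      moreover have "f u \<in> C" using \<open>u \<in> ?V\<close> C(2) by auto
      ultimately show "c \<in> C - {f v}" using u by auto
    qed
    have fv: "f v \<in> C" using v C(2) by auto
    have "card ?S = 1 \<or> card ?S = 2" using c1 c2 by auto
    then show "p \<in> ?T" using v(2) sC fv unfolding \<phi>_def by auto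
  qed
  have "n = card ?V" by (simp add: path_V_def)
  also have "\<dots> = card (\<phi> ` ?V)" using card_image[OF inj] by simp
  also have "\<dots> \<le> card ?T" by (rule card_mono) (use C(1) sub in auto)
  finally have "2 * n \<le> 2 * card ?T" by simp
  then show ?thesis using count_target[OF C(1)] by simp
qed

lemma NN2': "2 * NN k = k * k * (k - 1)" using NN2 cube_sub by simp

lemma NN_mono: "a \<le> b \<Longrightarrow> NN a \<le> NN b"
proof -
  assume "a \<le> b"
  then have "a * a * (a - 1) \<le> b * b * (b - 1)" by (intro mult_le_mono) auto
  then show ?thesis using NN2'[of a] NN2'[of b] by simp
qed

lemma NN_self: "2 \<le> n \<Longrightarrow> n \<le> NN n"
proof -
  assume n: "2 \<le> n"
  have "n * 2 \<le> n * (n * (n - 1))"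
  proof (rule mult_le_mono2)
    have "2 * 1 \<le> n * (n - 1)" using n by (intro mult_le_mono) auto
    then show "2 \<le> n * (n - 1)" by simp
  qed
  moreover have "n * (n * (n - 1)) = 2 * NN n" using NN2'[of n] by (simp add: mult.assoc)
  ultimately show ?thesis by linarith
qed

lemma NN_small: "NN 0 = 0" "NN 1 = 0" "NN 2 = 2" "NN 3 = 9" by (simp_all add: NN_def)

lemma list_f:
  assumes len: "length G = n" and n: "2 \<le> n" and g: "goodl m G"
  defines "f \<equiv> \<lambda>i. G ! (n - i)"
  shows "f ` path_V n = set G"
    and "\<forall>u\<in>path_V n. \<forall>v\<in>path_V n. path_E u v \<longrightarrow> f u \<noteq> f v"
    and "\<forall>u\<in>path_V n. \<forall>v\<in>path_V n. u \<noteq> v \<and> f u = f v \<longrightarrow>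
          f ` nbhd path_E (path_V n) u \<noteq> f ` nbhd path_E (path_V n) v"
proof -
  show "f ` path_V n = set G"
  proof
    show "f ` path_V n \<subseteq> set G" using len unfolding f_def path_V_def by auto
    show "set G \<subseteq> f ` path_V n"
    proof
      fix c assume "c \<in> set G"
      then obtain p where p: "p < n" "G ! p = c" using len by (auto simp: in_set_conv_nth)
      then have "f (n - p) = c" "n - p \<in> path_V n" unfolding f_def path_V_def by auto
      then show "c \<in> f ` path_V n" by force
    qed
  qed
  have succ: "successively (\<noteq>) G" and dist: "distinct (tr None G None)" using g by (auto simp: goodl_def)
  have adj: "\<And>p. Suc p < n \<Longrightarrow> G ! p \<noteq> G ! Suc p"
    using succ len by (auto simp: successively_conv_nth)
  show "\<forall>u\<in>path_V n. \<forall>v\<in>path_V n. path_E u v \<longrightarrow> f u \<noteq> f v"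
  proof (intro ballI impI)
    fix u v assume uv: "u \<in> path_V n" "v \<in> path_V n" "path_E u v"
    then consider "v = u + 1" | "u = v + 1" by (auto simp: path_E_def)
    then show "f u \<noteq> f v"
    proof cases
      case 1
      then have "Suc (n - v) < n" "n - u = Suc (n - v)" using uv by (auto simp: path_V_def)
      then show ?thesis using adj[of "n - v"] unfolding f_def by auto
    next
      case 2
      then have "Suc (n - u) < n" "n - v = Suc (n - u)" using uv by (auto simp: path_V_def)
      then show ?thesis using adj[of "n - u"] unfolding f_def by auto
    qed
  qed
  have nb: "\<And>i. i \<in> path_V n \<Longrightarrow> f ` nbhd path_E (path_V n) i = snd (tr None G None ! (n - i))"
  proof -
    fix i assume i: "i \<in> path_V n"
    have N: "nbhd path_E (path_V n) i = (if i < n then {i+1} else {}) \<union> (if 2 \<le> i then {i - 1} else {})"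
      using i unfolding nbhd_def path_E_def path_V_def by auto
    have T: "snd (tr None G None ! (n - i)) = (if n - i = 0 then {} else {G ! (n - i - 1)}) \<union>
        (if n - i = n - 1 then {} else {G ! (n - i + 1)})"
      using tr_nth[of "n - i" G None None] i len by (simp add: path_V_def)
    have a: "i < n \<longleftrightarrow> n - i \<noteq> 0" using i by (auto simp: path_V_def)
    have b: "2 \<le> i \<longleftrightarrow> n - i \<noteq> n - 1" using i by (auto simp: path_V_def)
    have c: "i < n \<Longrightarrow> f (i + 1) = G ! (n - i - 1)" unfolding f_def by (simp add: diff_diff_add)
    have d: "2 \<le> i \<Longrightarrow> f (i - 1) = G ! (n - i + 1)" using i unfolding f_def by (simp add: path_V_def Suc_diff_le)
    show "f ` nbhd path_E (path_V n) i = snd (tr None G None ! (n - i))"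
      unfolding N T using a b c d i by (cases "i = 1") (auto simp: path_V_def)
  qed
  show "\<forall>u\<in>path_V n. \<forall>v\<in>path_V n. u \<noteq> v \<and> f u = f v \<longrightarrow>
          f ` nbhd path_E (path_V n) u \<noteq> f ` nbhd path_E (path_V n) v"
  proof (intro ballI impI)
    fix u v assume uv: "u \<in> path_V n" "v \<in> path_V n" "u \<noteq> v \<and> f u = f v"
    have ne: "n - u \<noteq> n - v" "n - u < n" "n - v < n" using uv by (auto simp: path_V_def)
    have "tr None G None ! (n - u) \<noteq> tr None G None ! (n - v)"
      using dist ne len by (simp add: nth_eq_iff_index_eq)
    moreover have "fst (tr None G None ! (n - u)) = f u" "fst (tr None G None ! (n - v)) = f v"
      using tr_nth[of "n - u" G None None] tr_nth[of "n - v" G None None] ne len unfolding f_def by auto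
    ultimately have "snd (tr None G None ! (n - u)) \<noteq> snd (tr None G None ! (n - v))"
      using uv(3) by (metis prod.expand)
    then show "f ` nbhd path_E (path_V n) u \<noteq> f ` nbhd path_E (path_V n) v"
      using nb uv by simp
  qed
qed

lemma walk_exists:
  assumes n: "2 \<le> n" and up: "n \<le> NN m" and low: "\<forall>k<m. NN k < n"
  shows "\<exists>G. length G = n \<and> goodl m G \<and> G ! 0 = 1 \<and> G ! 1 = 2 \<and> (9 \<le> n \<longrightarrow> G ! 2 = m) \<and>
             (9 \<le> n \<and> n \<noteq> NN m - 1 \<longrightarrow> ends12 G)"
proof -
  have m2: "2 \<le> m"
  proof (rule ccontr)
    assume "\<not> 2 \<le> m"
    then have "m = 0 \<or> m = 1" by auto
    then show False using up n NN_small by auto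
  qed
  consider "m = 2" | "m = 3" | "4 \<le> m" using m2 by linarith
  then show ?thesis
  proof cases
    case 1
    then have "n = 2" using up n NN_small by simp
    then show ?thesis using 1 by (intro exI[of _ "[1,2]"]) (simp add: goodl_def)
  next
    case 2
    have "NN 2 < n" using low 2 by simp
    then have "3 \<le> n" "n \<le> 9" using up 2 NN_small by auto
    then consider "n = 3" | "n = 4" | "n = 5" | "n = 6" | "n = 7" | "n = 8" | "n = 9" by linarith
    then show ?thesis
    proof cases
      case 1 then show ?thesis using 2 by (intro exI[of _ "[1,2,3]"]) (simp add: goodl_def)
    next
      case 2 then show ?thesis using \<open>m = 3\<close> by (intro exI[of _ "[1,2,3,1]"]) (simp add: goodl_def)
    next
      case 3 then show ?thesis using \<open>m = 3\<close> by (intro exI[of _ "[1,2,3,1,2]"]) (simp add: goodl_def)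
    next
      case 4 then show ?thesis using \<open>m = 3\<close> by (intro exI[of _ "[1,2,3,2,3,1]"]) (simp add: goodl_def)
    next
      case 5 then show ?thesis using \<open>m = 3\<close> by (intro exI[of _ "[1,2,3,1,3,1,2]"]) (simp add: goodl_def)
    next
      case 6 then show ?thesis using \<open>m = 3\<close> by (intro exI[of _ "[1,2,1,3,1,3,2,3]"]) (simp add: goodl_def)
    next
      case 7 then show ?thesis using \<open>m = 3\<close>
        by (intro exI[of _ "[1,2,3,2,3,1,3,1,2]"]) (simp add: goodl_def ends12_def)
    qed
  next
    case 3
    define M where "M = m - 1"
    have M: "3 \<le> M" "m = Suc M" using 3 unfolding M_def by auto
    have "NN M < n" using low M by simp
    from step_main[OF M(1) QQ_all[OF M(1)] this] up M obtain G where
      G: "length G = n" "goodl m G" "take 3 G = [1,2,m]" "n \<noteq> NN m - 1 \<longrightarrow> ends12 G"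
      by auto
    have "G ! 0 = 1" "G ! 1 = 2" "G ! 2 = m" using G(3) nth_take[of _ 3 G]
      by (metis nth_Cons_0 nth_Cons_Suc One_nat_def Suc_1 zero_less_numeral numeral_3_eq_3
          lessI less_Suc_eq)+
    then show ?thesis using G by blast
  qed
qed

theorem theorem2:
  fixes n m :: nat
  assumes "n \<ge> 2"
    and "m = (LEAST k::nat. 2 * n \<le> k ^ 3 - k ^ 2)"
  shows "chi_L2 (path_V n) path_E = m \<and>
    (\<exists>f. neighbor_locating_coloring (path_V n) path_E m f \<and>
         f (n - 1) = 2 \<and> f n = 1 \<and>
         (n \<ge> 9 \<longrightarrow> f (n - 2) = m) \<and>
         (n \<ge> 9 \<and> 2 * n \<noteq> m ^ 3 - m ^ 2 - 2 \<longrightarrow> f 1 = 2 \<and> f 2 = 1))"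
proof -
  have n: "2 \<le> n" using assms(1) .
  have iff: "\<And>k. (2 * n \<le> k ^ 3 - k ^ 2) \<longleftrightarrow> n \<le> NN k"
  proof -
    fix k show "(2 * n \<le> k ^ 3 - k ^ 2) \<longleftrightarrow> n \<le> NN k" using NN2[of k] by linarith
  qed
  have mdef: "m = (LEAST k. n \<le> NN k)" using assms(2) iff by simp
  have up: "n \<le> NN m" unfolding mdef by (rule LeastI[of _ n]) (rule NN_self[OF n])
  have low: "\<forall>k<m. NN k < n" unfolding mdef using not_less_Least by (metis not_le)
  have minim: "\<And>k. n \<le> NN k \<Longrightarrow> m \<le> k" unfolding mdef by (rule Least_le)
  obtain G where G: "length G = n" "goodl m G" "G ! 0 = 1" "G ! 1 = 2" "9 \<le> n \<longrightarrow> G ! 2 = m"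
      "9 \<le> n \<and> n \<noteq> NN m - 1 \<longrightarrow> ends12 G"
    using walk_exists[OF n up low] by blast
  define f where "f = (\<lambda>i. G ! (n - i))"
  have fV: "f ` path_V n = set G" and fp: "\<forall>u\<in>path_V n. \<forall>v\<in>path_V n. path_E u v \<longrightarrow> f u \<noteq> f v"
    and fl: "\<forall>u\<in>path_V n. \<forall>v\<in>path_V n. u \<noteq> v \<and> f u = f v \<longrightarrow>
          f ` nbhd path_E (path_V n) u \<noteq> f ` nbhd path_E (path_V n) v"
    using list_f[OF G(1) n G(2)] unfolding f_def by blast+
  have sG: "set G \<subseteq> {1..m}" using G(2) by (simp add: goodl_def)
  have onto: "f ` path_V n = {1..m}"
  proof (rule card_subset_eq)
    show "finite {1..m}" by simp
    show "f ` path_V n \<subseteq> {1..m}" using fV sG by simp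
    have "2 * n \<le> card (f ` path_V n) ^ 3 - card (f ` path_V n) ^ 2"
      by (rule lower_bound[OF n _ order_refl fp fl]) (simp add: path_V_def)
    then have "m \<le> card (f ` path_V n)" using iff minim by blast
    moreover have "card (f ` path_V n) \<le> card {1..m}" by (rule card_mono) (use \<open>f ` path_V n \<subseteq> {1..m}\<close> in auto)
    ultimately show "card (f ` path_V n) = card {1..m}" by simp
  qed
  have NL: "neighbor_locating_coloring (path_V n) path_E m f"
    unfolding neighbor_locating_coloring_def proper_coloring_def using onto fp fl by blast
  have chi: "chi_L2 (path_V n) path_E = m"
    unfolding chi_L2_def
  proof (rule Least_equality)
    show "\<exists>f. neighbor_locating_coloring (path_V n) path_E m f" using NL by blast
  next
    fix k assume "\<exists>f. neighbor_locating_coloring (path_V n) path_E k f"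
    then obtain g where g: "neighbor_locating_coloring (path_V n) path_E k g" by blast
    then have gV: "g ` path_V n = {1..k}" and gp: "\<forall>u\<in>path_V n. \<forall>v\<in>path_V n. path_E u v \<longrightarrow> g u \<noteq> g v"
      and gl: "\<forall>u\<in>path_V n. \<forall>v\<in>path_V n. u \<noteq> v \<and> g u = g v \<longrightarrow>
          g ` nbhd path_E (path_V n) u \<noteq> g ` nbhd path_E (path_V n) v"
      unfolding neighbor_locating_coloring_def proper_coloring_def by blast+
    have "2 * n \<le> card {1..k} ^ 3 - card {1..k} ^ 2"
      by (rule lower_bound[OF n _ _ gp gl]) (use gV in auto)
    then show "m \<le> k" using iff minim by simp
  qed
  have f1: "f (n - 1) = 2" "f n = 1" unfolding f_def using G n by auto
  have f2: "n \<ge> 9 \<longrightarrow> f (n - 2) = m" unfolding f_def using G n by auto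
  have f3: "n \<ge> 9 \<and> 2 * n \<noteq> m ^ 3 - m ^ 2 - 2 \<longrightarrow> f 1 = 2 \<and> f 2 = 1"
  proof
    assume a: "n \<ge> 9 \<and> 2 * n \<noteq> m ^ 3 - m ^ 2 - 2"
    have "n \<noteq> NN m - 1" using a NN2[of m] by auto
    then have "ends12 G" using G a by blast
    then have "drop (n - 2) G = [1,2]" using G(1) by (simp add: ends12_def)
    moreover have "drop (n - 2) G ! 0 = G ! (n - 2)" using G(1) n by simp
    moreover have "drop (n - 2) G ! 1 = G ! (n - 1)"
    proof -
      have "drop (n - 2) G ! 1 = G ! (n - 2 + 1)" using G(1) n by (simp add: nth_drop)
      also have "n - 2 + 1 = n - 1" using n by simp
      finally show ?thesis .
    qed
    ultimately have "G ! (n - 2) = 1" "G ! (n - 1) = 2" by simp_all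
    then show "f 1 = 2 \<and> f 2 = 1" unfolding f_def by simp
  qed
  show ?thesis using chi NL f1 f2 f3 by blast
qed

end
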